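(* Consider a Fisher market with $n$ agents, a finite set $M$ of indivisible items, budgets $b_1,\dots,b_n>0$ that are pairwise distinct, and each agent having a lexicographic preference over $2^M$. Then a competitive equilibrium exists.
   Context: A preference $\preceq_i$ on $2^M$ is lexicographic if there is a strict order $\succ^*_i$ on items such that for $S\ne T$, $S\succ_i T$ iff the $\succ^*_i$-maximal item of $S\setminus T$ is $\succ^*_i$-preferred to the $\succ^*_i$-maximal item of $T\setminus S$ (trivially true when $T\setminus S=\emptyset$). Given item prices $p$ with $p(S)=\sum_{j\in S}p_j$, a bundle $S$ is demanded by agent $i$ if $p(S)\le b_i$ and $p(T)>b_i$ for every $T$ with $S\prec_i T$. A competitive equilibrium is a pair $(\mathcal S,p)$ with $\mathcal S=(S_1,\dots,S_n)$ a partition of all of $M$ among the agents (parts may be empty) such that $S_i$ is demanded by agent $i$ at prices $p$ for every $i$. *)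

theory Defs
  imports Complex_Main
begin

text \<open>A lexicographic strict preference on subsets of the item set M, induced by a
  strict order R on items (R x y means item x is strictly preferred to item y).\<close>

definition lex_maximal :: "('b \<Rightarrow> 'b \<Rightarrow> bool) \<Rightarrow> 'b set \<Rightarrow> 'b \<Rightarrow> bool" where
  "lex_maximal R A x \<longleftrightarrow> x \<in> A \<and> (\<forall>y\<in>A. y \<noteq> x \<longrightarrow> R x y)"

definition lex_pref :: "('b \<Rightarrow> 'b \<Rightarrow> bool) \<Rightarrow> 'b set \<Rightarrow> 'b set \<Rightarrow> bool" where
  "lex_pref R S T \<longleftrightarrow> S \<noteq> T \<and>
     (T - S = {} \<or>
      (\<exists>x y. lex_maximal R (S - T) x \<and> lex_maximal R (T - S) y \<and> R x y))"

definition strict_linear_order_on_set :: "'b set \<Rightarrow> ('b \<Rightarrow> 'b \<Rightarrow> bool) \<Rightarrow> bool" where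
  "strict_linear_order_on_set M R \<longleftrightarrow>
     (\<forall>x\<in>M. \<not> R x x) \<and>
     (\<forall>x\<in>M. \<forall>y\<in>M. \<forall>z\<in>M. R x y \<longrightarrow> R y z \<longrightarrow> R x z) \<and>
     (\<forall>x\<in>M. \<forall>y\<in>M. x \<noteq> y \<longrightarrow> R x y \<or> R y x)"

definition price :: "('b \<Rightarrow> real) \<Rightarrow> 'b set \<Rightarrow> real" where
  "price p S = (\<Sum>j\<in>S. p j)"

definition demanded :: "'b set \<Rightarrow> ('b \<Rightarrow> 'b \<Rightarrow> bool) \<Rightarrow> real \<Rightarrow> ('b \<Rightarrow> real) \<Rightarrow> 'b set \<Rightarrow> bool" where
  "demanded M R b p S \<longleftrightarrow> S \<subseteq> M \<and> price p S \<le> b \<and>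
     (\<forall>T. T \<subseteq> M \<longrightarrow> lex_pref R T S \<longrightarrow> price p T > b)"

definition competitive_equilibrium ::
  "'a set \<Rightarrow> 'b set \<Rightarrow> ('a \<Rightarrow> 'b \<Rightarrow> 'b \<Rightarrow> bool) \<Rightarrow> ('a \<Rightarrow> real) \<Rightarrow> ('a \<Rightarrow> 'b set) \<Rightarrow> ('b \<Rightarrow> real) \<Rightarrow> bool" where
  "competitive_equilibrium N M R b X p \<longleftrightarrow>
     (\<Union>i\<in>N. X i) = M \<and>
     (\<forall>i\<in>N. \<forall>k\<in>N. i \<noteq> k \<longrightarrow> X i \<inter> X k = {}) \<and>
     (\<forall>i\<in>N. demanded M (R i) (b i) p (X i))"

end

theory Submission
  imports Defs
begin

lemma slo_subset: "strict_linear_order_on_set M R \<Longrightarrow> A \<subseteq> M \<Longrightarrow> strict_linear_order_on_set A R"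
  unfolding strict_linear_order_on_set_def by blast

lemma top_exists:
  assumes "finite A" "A \<noteq> {}" "strict_linear_order_on_set A R"
  shows "\<exists>x\<in>A. \<forall>y\<in>A. y \<noteq> x \<longrightarrow> R x y"
  using assms
proof (induction A rule: finite_ne_induct)
  case (singleton x) then show ?case by auto
next
  case (insert a F)
  have sF: "strict_linear_order_on_set F R" using insert.prems slo_subset by blast
  obtain t where t: "t \<in> F" "\<forall>y\<in>F. y \<noteq> t \<longrightarrow> R t y" using insert.IH sF by blast
  have at: "a \<noteq> t" using t insert.hyps by auto
  have o: "R a t \<or> R t a" using insert.prems at t(1) unfolding strict_linear_order_on_set_def by blast
  show ?case
  proof (cases "R a t")
    case True
    have "\<forall>y\<in>insert a F. y \<noteq> a \<longrightarrow> R a y"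
    proof (intro ballI impI)
      fix y assume y: "y \<in> insert a F" "y \<noteq> a"
      then have yF: "y \<in> F" by auto
      show "R a y"
      proof (cases "y = t")
        case True then show ?thesis using \<open>R a t\<close> by simp
      next
        case False then have "R t y" using t yF by auto
        then show ?thesis using \<open>R a t\<close> insert.prems yF t(1)
          unfolding strict_linear_order_on_set_def by blast
      qed
    qed
    then show ?thesis by blast
  next
    case False
    then have "R t a" using o by simp
    then show ?thesis using t by auto
  qed
qed

lemma gen:
  fixes N :: "'a set" and b :: "'a \<Rightarrow> real"
  shows "finite N \<Longrightarrow> N \<noteq> {} \<Longrightarrow> finite M \<Longrightarrow> (\<forall>i\<in>N. b i > 0) \<Longrightarrow> inj_on b N \<Longrightarrow>
    (\<forall>i\<in>N. strict_linear_order_on_set M (R i)) \<Longrightarrow>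
    \<exists>X p. competitive_equilibrium N M R b X p \<and> (\<forall>j\<in>M. p j > 0)"
proof (induction "card N" arbitrary: N M rule: less_induct)
  case less
  note fN = less.prems(1) and neN = less.prems(2) and fM = less.prems(3)
    and bpos = less.prems(4) and inj = less.prems(5) and slo = less.prems(6)
  define m where "m = Max (b ` N)"
  have "m \<in> b ` N" unfolding m_def using fN neN by simp
  then obtain i where i1: "i \<in> N" "b i = m" by blast
  have i2: "\<forall>k\<in>N. b k \<le> b i" using i1 fN unfolding m_def by simp
  note i = i1(1) i2
  have blt: "b k < b i" if "k \<in> N" "k \<noteq> i" for k
    using i that inj unfolding inj_on_def by force
  show ?case
  proof (cases "M = {}")
    case True
    have "competitive_equilibrium N M R b (\<lambda>_. {}) (\<lambda>_. 1)"
      unfolding competitive_equilibrium_def demanded_def price_def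
      using True bpos by (auto simp: less_le lex_pref_def)
    then show ?thesis using True by blast
  next
    case Mne: False
    show ?thesis
    proof (cases "N - {i} = {}")
      case True
      then have Ni: "N = {i}" using i by auto
      define p where "p = (\<lambda>_::'b. b i / real (card M))"
      have cM: "card M > 0" using fM Mne by (simp add: card_gt_0_iff)
      have pM: "price p M = b i" unfolding price_def p_def using cM by simp
      have "demanded M (R i) (b i) p M"
        unfolding demanded_def using pM
        by (auto simp: lex_pref_def lex_maximal_def)
      then have "competitive_equilibrium N M R b (\<lambda>_. M) p"
        unfolding competitive_equilibrium_def using Ni by auto
      moreover have "\<forall>j\<in>M. p j > 0" unfolding p_def using cM bpos i by auto
      ultimately show ?thesis by blast
    next
      case False
      obtain x1 where x1: "x1 \<in> M" "\<forall>y\<in>M. y \<noteq> x1 \<longrightarrow> R i x1 y"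
        using top_exists[OF fM Mne] slo i by blast
      have "card (N - {i}) < card N" using fN i(1) by (meson card_Diff1_less)
      moreover have "\<forall>k\<in>N - {i}. strict_linear_order_on_set (M - {x1}) (R k)"
        using slo slo_subset by blast
      moreover have "inj_on b (N - {i})" using inj by (simp add: inj_on_diff)
      ultimately obtain X' p' where
        ce: "competitive_equilibrium (N - {i}) (M - {x1}) R b X' p'" and
        pp: "\<forall>j\<in>M - {x1}. p' j > 0"
        using less.hyps[of "N - {i}" "M - {x1}"] fN False fM bpos by blast
      define X where "X = (\<lambda>k. if k = i then {x1} else X' k)"
      define p where "p = (\<lambda>j. if j = x1 then b i else p' j)"
      have ppos: "\<forall>j\<in>M. p j > 0" unfolding p_def using pp bpos i by auto
      have X'sub: "X' k \<subseteq> M - {x1}" if "k \<in> N - {i}" for k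
        using ce that unfolding competitive_equilibrium_def by auto
      have pr_eq: "price p T = price p' T" if "T \<subseteq> M - {x1}" for T
        unfolding price_def p_def using that by (intro sum.cong) auto
      have pr_ge: "price p T \<ge> b i" if "T \<subseteq> M" "x1 \<in> T" for T
      proof -
        have fT: "finite T" using that fM finite_subset by blast
        have "price p {x1} \<le> price p T" unfolding price_def
          using fT that ppos by (intro sum_mono2) (auto intro!: less_imp_le)
        then show ?thesis by (simp add: price_def p_def)
      qed
      have dem_i: "demanded M (R i) (b i) p {x1}"
        unfolding demanded_def
      proof (intro conjI allI impI)
        show "{x1} \<subseteq> M" using x1 by auto
        show "price p {x1} \<le> b i" by (simp add: price_def p_def)
        fix T assume T: "T \<subseteq> M" "lex_pref (R i) T {x1}"
        show "price p T > b i"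
        proof (cases "x1 \<in> T")
          case True
          then obtain z where z: "z \<in> T" "z \<noteq> x1" using T(2) unfolding lex_pref_def by blast
          have fT: "finite T" using T fM finite_subset by blast
          have "price p {x1, z} \<le> price p T" unfolding price_def
            using fT True z T ppos by (intro sum_mono2) (auto intro!: less_imp_le)
          moreover have "price p {x1, z} = b i + p z" using z by (simp add: price_def p_def)
          moreover have "p z > 0" using ppos z T by auto
          ultimately show ?thesis by linarith
        next
          case False
          then obtain x where xx: "x \<in> T" "R i x x1" using T(2)
            unfolding lex_pref_def lex_maximal_def by auto
          then have "x \<noteq> x1" using False by auto
          then have "R i x1 x" using x1 xx T by auto
          have so: "strict_linear_order_on_set M (R i)" using slo i by blast
          have xM: "x \<in> M" using xx T by auto
          have "R i x x" using so xM x1(1) \<open>R i x1 x\<close> xx(2)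
            unfolding strict_linear_order_on_set_def by blast
          then show ?thesis using so xM unfolding strict_linear_order_on_set_def by blast
        qed
      qed
      have dem_k: "demanded M (R k) (b k) p (X' k)" if k: "k \<in> N - {i}" for k
      proof -
        have d: "demanded (M - {x1}) (R k) (b k) p' (X' k)"
          using ce k unfolding competitive_equilibrium_def by auto
        show ?thesis unfolding demanded_def
        proof (intro conjI allI impI)
          show "X' k \<subseteq> M" using X'sub[OF k] by auto
          show "price p (X' k) \<le> b k" using d pr_eq[OF X'sub[OF k]] unfolding demanded_def by simp
          fix T assume T: "T \<subseteq> M" "lex_pref (R k) T (X' k)"
          show "price p T > b k"
          proof (cases "x1 \<in> T")
            case True
            then show ?thesis using pr_ge[OF T(1) True] blt k by force
          next
            case False
            then have "T \<subseteq> M - {x1}" using T by auto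
            then show ?thesis using d T pr_eq unfolding demanded_def by auto
          qed
        qed
      qed
      have "competitive_equilibrium N M R b X p"
        unfolding competitive_equilibrium_def
      proof (intro conjI ballI impI)
        have U: "(\<Union>k\<in>N - {i}. X' k) = M - {x1}" using ce unfolding competitive_equilibrium_def by auto
        have "(\<Union>k\<in>N. X k) = X i \<union> (\<Union>k\<in>N - {i}. X k)" using i by blast
        also have "(\<Union>k\<in>N - {i}. X k) = (\<Union>k\<in>N - {i}. X' k)" unfolding X_def by auto
        finally show "(\<Union>k\<in>N. X k) = M" using U x1 unfolding X_def by auto
      next
        fix k l assume kl: "k \<in> N" "l \<in> N" "k \<noteq> l"
        show "X k \<inter> X l = {}"
        proof (cases "k = i \<or> l = i")
          case True then show ?thesis using kl X'sub unfolding X_def by auto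
        next
          case False then show ?thesis using kl ce unfolding X_def competitive_equilibrium_def by auto
        qed
      next
        fix k assume k: "k \<in> N"
        show "demanded M (R k) (b k) p (X k)"
          using dem_i dem_k k unfolding X_def by auto
      qed
      then show ?thesis using ppos by blast
    qed
  qed
qed

theorem mainTheorem10:
  fixes N :: "'a set" and M :: "'b set"
    and R :: "'a \<Rightarrow> 'b \<Rightarrow> 'b \<Rightarrow> bool" and b :: "'a \<Rightarrow> real"
  assumes "finite N" and "N \<noteq> {}" and "finite M"
    and "\<forall>i\<in>N. b i > 0"
    and "inj_on b N"
    and "\<forall>i\<in>N. strict_linear_order_on_set M (R i)"
  shows "\<exists>X p. competitive_equilibrium N M R b X p"
  using gen[OF assms] by blast

end
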